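(* Let $G=(V,E)$ be a $k$-uniform linear hypergraph with an edge correspondence $\sigma$ and weighted lists of colours $(L,\mu)$ assigned to its edges, where every list $L(e)$ is finite. Let $\ell,n>0$ be such that, for all $e\in E$: (i) $\ell/n\ge 3ek$ (here $e$ in $3ek$ denotes Euler's number); (ii) $|L(e)|_\mu\ge\ell$; (iii) $|N_{G,L,\sigma}(e,v,c)|_\mu\le n$ for all $v\in e$ and $c\in L(e)$. Then $G$ has an $(L,\sigma)$-colouring.
   Context: A hypergraph is $k$-uniform if every edge has exactly $k$ vertices, and linear if any two distinct edges share at most one vertex; distinct edges sharing a vertex are adjacent. Colours are positive integers. A weighted list assignment $(L,\mu)$ gives each edge $e$ a list $L(e)\subseteq\mathbb{N}$ and weights $\mu(e)\colon L(e)\to(0,1]$, written $\mu(e,c)$; for $A\subseteq E\times\mathbb{N}$, $|A|_\mu=\sum_{(e,c)\in A}\mu(e,c)$ and $|L(e)|_\mu=\sum_{c\in L(e)}\mu(e,c)$. An edge correspondence $\sigma$ consists of permutations $\sigma_{e,f}$ of $\mathbb{N}$ for all adjacent edges $e,f$ with $\sigma_{e,f}=\sigma_{f,e}^{-1}$; $(e,c)$ blocks $(f,c')$ if $\sigma_{e,f}(c)=c'$. An $(L,\sigma)$-colouring is $\gamma\colon E\to\mathbb{N}$ with $\gamma(e)\in L(e)$ such that $(e,\gamma(e))$ does not block $(f,\gamma(f))$ for all adjacent $e,f$. $N_{G,L,\sigma}(e,v,c)$ is the set of pairs $(f,c')$ with $v\in f$, $f\ne e$, $c'\in L(f)$ and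 $(f,c')$ blocking $(e,c)$. *)

theory Defs
  imports Complex_Main
begin

definition k_uniform :: "nat \<Rightarrow> 'v set \<Rightarrow> 'v set set \<Rightarrow> bool" where
  "k_uniform k V E \<longleftrightarrow> (\<forall>e\<in>E. e \<subseteq> V \<and> finite e \<and> card e = k)"

definition linear_hg :: "'v set set \<Rightarrow> bool" where
  "linear_hg E \<longleftrightarrow> (\<forall>e\<in>E. \<forall>f\<in>E. e \<noteq> f \<longrightarrow> card (e \<inter> f) \<le> 1)"

definition adjacent :: "'v set set \<Rightarrow> 'v set \<Rightarrow> 'v set \<Rightarrow> bool" where
  "adjacent E e f \<longleftrightarrow> e \<in> E \<and> f \<in> E \<and> e \<noteq> f \<and> e \<inter> f \<noteq> {}"

definition colours :: "nat set" where
  "colours = {c. 0 < c}"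

definition edge_correspondence :: "'v set set \<Rightarrow> ('v set \<Rightarrow> 'v set \<Rightarrow> nat \<Rightarrow> nat) \<Rightarrow> bool" where
  "edge_correspondence E \<sigma> \<longleftrightarrow>
     (\<forall>e f. adjacent E e f \<longrightarrow>
        bij_betw (\<sigma> e f) colours colours \<and>
        (\<forall>c\<in>colours. \<sigma> f e (\<sigma> e f c) = c))"

definition weighted_list_assignment ::
  "'v set set \<Rightarrow> ('v set \<Rightarrow> nat set) \<Rightarrow> ('v set \<Rightarrow> nat \<Rightarrow> real) \<Rightarrow> bool" where
  "weighted_list_assignment E L \<mu> \<longleftrightarrow>
     (\<forall>e\<in>E. L e \<subseteq> colours \<and> (\<forall>c\<in>L e. 0 < \<mu> e c \<and> \<mu> e c \<le> 1))"

definition blocks :: "('v set \<Rightarrow> 'v set \<Rightarrow> nat \<Rightarrow> nat) \<Rightarrow> 'v set \<Rightarrow> nat \<Rightarrow> 'v set \<Rightarrow> nat \<Rightarrow> bool" where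
  "blocks \<sigma> e c f c' \<longleftrightarrow> \<sigma> e f c = c'"

definition weight :: "('v set \<Rightarrow> nat \<Rightarrow> real) \<Rightarrow> ('v set \<times> nat) set \<Rightarrow> real" where
  "weight \<mu> A = (\<Sum>(e, c)\<in>A. \<mu> e c)"

definition list_weight :: "('v set \<Rightarrow> nat \<Rightarrow> real) \<Rightarrow> ('v set \<Rightarrow> nat set) \<Rightarrow> 'v set \<Rightarrow> real" where
  "list_weight \<mu> L e = (\<Sum>c\<in>L e. \<mu> e c)"

definition Nbhd :: "'v set set \<Rightarrow> ('v set \<Rightarrow> nat set) \<Rightarrow> ('v set \<Rightarrow> 'v set \<Rightarrow> nat \<Rightarrow> nat)
                    \<Rightarrow> 'v set \<Rightarrow> 'v \<Rightarrow> nat \<Rightarrow> ('v set \<times> nat) set" where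
  "Nbhd E L \<sigma> e v c = {(f, c'). f \<in> E \<and> v \<in> f \<and> f \<noteq> e \<and> c' \<in> L f \<and> blocks \<sigma> f c' e c}"

definition is_colouring :: "'v set set \<Rightarrow> ('v set \<Rightarrow> nat set) \<Rightarrow> ('v set \<Rightarrow> 'v set \<Rightarrow> nat \<Rightarrow> nat)
                            \<Rightarrow> ('v set \<Rightarrow> nat) \<Rightarrow> bool" where
  "is_colouring E L \<sigma> \<gamma> \<longleftrightarrow>
     (\<forall>e\<in>E. \<gamma> e \<in> L e) \<and>
     (\<forall>e f. adjacent E e f \<longrightarrow> \<not> blocks \<sigma> e (\<gamma> e) f (\<gamma> f))"

end

theory Submission imports Defs "HOL-Library.FuncSet" begin
lemma exp1_ge: "(8::real) / 3 \<le> exp 1"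
proof -
  have s: "(\<lambda>n. (1::real)^n /\<^sub>R fact n) sums exp 1" by (rule exp_converges)
  have "(\<Sum>n<5. (1::real)^n /\<^sub>R fact n) \<le> suminf (\<lambda>n. (1::real)^n /\<^sub>R fact n)"
    by (rule sum_le_suminf) (use s sums_summable in auto)
  also have "\<dots> = exp 1" using s sums_unique by metis
  finally have "(\<Sum>n<5. (1::real)^n /\<^sub>R fact n) \<le> exp 1" .
  moreover have "(\<Sum>n<5. (1::real)^n /\<^sub>R fact n) = 1 + 1 + 1/2 + 1/6 + 1/24"
    by (simp add: lessThan_nat_numeral fact_numeral)
  ultimately show ?thesis by simp
qed

definition Wt :: "('a \<Rightarrow> real) \<Rightarrow> 'a set \<Rightarrow> 'a set \<Rightarrow> real" where
  "Wt w \<Omega> X = sum w (\<Omega> \<inter> X)"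

definition Gd :: "('b \<Rightarrow> 'a set) \<Rightarrow> 'b set \<Rightarrow> 'a set" where
  "Gd A S = - (\<Union>b\<in>S. A b)"

lemma Wt_nonneg: "(\<forall>g\<in>\<Omega>. w g \<ge> 0) \<Longrightarrow> Wt w \<Omega> X \<ge> 0"
  unfolding Wt_def by (rule sum_nonneg) auto

lemma Wt_mono: "finite \<Omega> \<Longrightarrow> (\<forall>g\<in>\<Omega>. w g \<ge> 0) \<Longrightarrow> X \<subseteq> Y \<Longrightarrow> Wt w \<Omega> X \<le> Wt w \<Omega> Y"
  unfolding Wt_def by (rule sum_mono2) auto

lemma Wt_Un_le: assumes "finite \<Omega>" "\<forall>g\<in>\<Omega>. w g \<ge> 0"
  shows "Wt w \<Omega> (X \<union> Y) \<le> Wt w \<Omega> X + Wt w \<Omega> Y"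
proof -
  have "\<Omega> \<inter> (X \<union> Y) = (\<Omega> \<inter> X) \<union> (\<Omega> \<inter> Y)" by auto
  then have "Wt w \<Omega> (X \<union> Y) = Wt w \<Omega> X + Wt w \<Omega> Y - sum w ((\<Omega> \<inter> X) \<inter> (\<Omega> \<inter> Y))"
    unfolding Wt_def using assms by (simp add: sum_Un)
  moreover have "sum w ((\<Omega> \<inter> X) \<inter> (\<Omega> \<inter> Y)) \<ge> 0" using assms by (intro sum_nonneg) auto
  ultimately show ?thesis by linarith
qed

lemma Wt_UN_le: assumes "finite \<Omega>" "\<forall>g\<in>\<Omega>. w g \<ge> 0" "finite S"
  shows "Wt w \<Omega> (\<Union>b\<in>S. Y b) \<le> (\<Sum>b\<in>S. Wt w \<Omega> (Y b))"
  using assms(3)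
proof induction
  case empty then show ?case by (simp add: Wt_def)
next
  case (insert b S)
  have "Wt w \<Omega> (\<Union>b\<in>insert b S. Y b) = Wt w \<Omega> (Y b \<union> (\<Union>b\<in>S. Y b))" by simp
  also have "\<dots> \<le> Wt w \<Omega> (Y b) + Wt w \<Omega> (\<Union>b\<in>S. Y b)" by (rule Wt_Un_le[OF assms(1,2)])
  also have "\<dots> \<le> Wt w \<Omega> (Y b) + (\<Sum>b\<in>S. Wt w \<Omega> (Y b))" using insert by simp
  finally show ?case using insert by simp
qed

lemma Wt_diff: assumes "finite \<Omega>"
  shows "Wt w \<Omega> (X - Y) = Wt w \<Omega> X - Wt w \<Omega> (X \<inter> Y)"
proof -
  have "\<Omega> \<inter> (X - Y) = (\<Omega> \<inter> X) - (\<Omega> \<inter> (X \<inter> Y))" by auto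
  then show ?thesis unfolding Wt_def by (simp only:) (rule sum_diff, use assms in auto)
qed

lemma lll_core:
  fixes A :: "'b \<Rightarrow> 'a set" and dm :: "'b \<Rightarrow> 'c set" and P x :: "'b \<Rightarrow> real"
  assumes fin: "finite \<Omega>" and wnn: "\<forall>g\<in>\<Omega>. w g \<ge> 0" and finB: "finite B"
   and indep: "\<forall>b\<in>B. \<forall>S\<subseteq>B. (\<forall>C\<in>S. dm C \<inter> dm b = {}) \<longrightarrow> Wt w \<Omega> (A b \<inter> Gd A S) \<le> P b * Wt w \<Omega> (Gd A S)"
   and xnn: "\<forall>b\<in>B. 0 \<le> x b"
   and cond: "\<forall>b\<in>B. P b \<le> x b * (1 - (\<Sum>C\<in>{C\<in>B. dm C \<inter> dm b \<noteq> {}}. x C))"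
  shows "finite S \<Longrightarrow> S \<subseteq> B \<Longrightarrow> b \<in> B \<Longrightarrow> Wt w \<Omega> (A b \<inter> Gd A S) \<le> x b * Wt w \<Omega> (Gd A S)"
proof (induction S arbitrary: b rule: finite_psubset_induct)
  case (psubset S)
  define S2 where "S2 = {C\<in>S. dm C \<inter> dm b = {}}"
  define S1 where "S1 = S - S2"
  define G where "G = Wt w \<Omega> (Gd A S2)"
  define \<Gamma> where "\<Gamma> = {C\<in>B. dm C \<inter> dm b \<noteq> {}}"
  have G0: "G \<ge> 0" unfolding G_def using wnn by (rule Wt_nonneg)
  have S2S: "S2 \<subseteq> S" unfolding S2_def by auto
  have finS1: "finite S1" unfolding S1_def using psubset.hyps by auto
  have S1G: "S1 \<subseteq> \<Gamma>" unfolding S1_def S2_def \<Gamma>_def using psubset.prems by auto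
  have finG: "finite \<Gamma>" unfolding \<Gamma>_def using finB by auto
  have ih: "Wt w \<Omega> (A C \<inter> Gd A S2) \<le> x C * G" if C: "C \<in> S1" for C
  proof -
    have "S2 \<subset> S" using C S1_def S2S by auto
    moreover have "C \<in> B" using C S1_def psubset.prems by auto
    ultimately show ?thesis using psubset.IH psubset.prems unfolding G_def by auto
  qed
  have eq: "Gd A S2 = Gd A S \<union> (\<Union>C\<in>S1. A C \<inter> Gd A S2)"
    unfolding Gd_def S1_def S2_def by auto
  have "G \<le> Wt w \<Omega> (Gd A S) + Wt w \<Omega> (\<Union>C\<in>S1. A C \<inter> Gd A S2)"
    unfolding G_def by (subst eq) (rule Wt_Un_le[OF fin wnn])
  also have "Wt w \<Omega> (\<Union>C\<in>S1. A C \<inter> Gd A S2) \<le> (\<Sum>C\<in>S1. Wt w \<Omega> (A C \<inter> Gd A S2))"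
    by (rule Wt_UN_le[OF fin wnn finS1])
  also have "\<dots> \<le> (\<Sum>C\<in>S1. x C * G)" by (rule sum_mono) (rule ih)
  also have "\<dots> = G * (\<Sum>C\<in>S1. x C)" by (simp add: sum_distrib_left mult.commute)
  also have "\<dots> \<le> G * (\<Sum>C\<in>\<Gamma>. x C)"
    by (intro mult_left_mono G0 sum_mono2 finG S1G) (use xnn \<Gamma>_def in auto)
  finally have hG: "G * (1 - (\<Sum>C\<in>\<Gamma>. x C)) \<le> Wt w \<Omega> (Gd A S)" by (simp add: algebra_simps)
  have "Wt w \<Omega> (A b \<inter> Gd A S) \<le> Wt w \<Omega> (A b \<inter> Gd A S2)"
    by (intro Wt_mono[OF fin wnn]) (use S2S in \<open>auto simp: Gd_def\<close>)
  also have "\<dots> \<le> P b * G"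
    unfolding G_def using indep psubset.prems S2S unfolding S2_def by blast
  also have "\<dots> \<le> (x b * (1 - (\<Sum>C\<in>\<Gamma>. x C))) * G"
    by (rule mult_right_mono) (use cond psubset.prems G0 \<Gamma>_def in auto)
  also have "\<dots> = x b * (G * (1 - (\<Sum>C\<in>\<Gamma>. x C)))" by simp
  also have "\<dots> \<le> x b * Wt w \<Omega> (Gd A S)"
    by (rule mult_left_mono[OF hG]) (use xnn psubset.prems in auto)
  finally show ?case .
qed

lemma lll:
  fixes A :: "'b \<Rightarrow> 'a set" and dm :: "'b \<Rightarrow> 'c set" and P x :: "'b \<Rightarrow> real"
  assumes fin: "finite \<Omega>" and wnn: "\<forall>g\<in>\<Omega>. w g \<ge> 0" and finB: "finite B"
   and indep: "\<forall>b\<in>B. \<forall>S\<subseteq>B. (\<forall>C\<in>S. dm C \<inter> dm b = {}) \<longrightarrow> Wt w \<Omega> (A b \<inter> Gd A S) \<le> P b * Wt w \<Omega> (Gd A S)"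
   and xnn: "\<forall>b\<in>B. 0 \<le> x b"
   and cond: "\<forall>b\<in>B. P b \<le> x b * (1 - (\<Sum>C\<in>{C\<in>B. dm C \<inter> dm b \<noteq> {}}. x C))"
   and x1: "\<forall>b\<in>B. x b < 1" and pos: "sum w \<Omega> > 0"
  shows "\<Omega> \<inter> Gd A B \<noteq> {}"
proof -
  have main: "S \<subseteq> B \<Longrightarrow> Wt w \<Omega> (Gd A S) \<ge> (\<Prod>b\<in>S. (1 - x b)) * sum w \<Omega>" for S
  proof -
    assume "S \<subseteq> B"
    then have "finite S" using finB finite_subset by auto
    then show ?thesis using \<open>S \<subseteq> B\<close>
    proof (induction S)
      case empty then show ?case by (simp add: Wt_def Gd_def)
    next
      case (insert b S)
      have sb: "S \<subseteq> B" "b \<in> B" using insert by auto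
      have "Gd A (insert b S) = Gd A S - A b" by (auto simp: Gd_def)
      then have "Wt w \<Omega> (Gd A (insert b S)) = Wt w \<Omega> (Gd A S) - Wt w \<Omega> (A b \<inter> Gd A S)"
        using Wt_diff[OF fin] by (simp add: Int_commute)
      moreover have "Wt w \<Omega> (A b \<inter> Gd A S) \<le> x b * Wt w \<Omega> (Gd A S)"
        using lll_core[OF assms(1-6) insert(1) sb] .
      ultimately have "Wt w \<Omega> (Gd A (insert b S)) \<ge> (1 - x b) * Wt w \<Omega> (Gd A S)"
        by (simp add: algebra_simps)
      moreover have "(1 - x b) * Wt w \<Omega> (Gd A S) \<ge> (1 - x b) * ((\<Prod>b\<in>S. (1 - x b)) * sum w \<Omega>)"
        using insert sb x1 by (intro mult_left_mono) auto
      ultimately show ?case using insert by (simp add: mult.assoc)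
    qed
  qed
  have "(\<Prod>b\<in>B. (1 - x b)) > 0" using x1 by (intro prod_pos) auto
  then have "Wt w \<Omega> (Gd A B) > 0" using main[of B] pos
    by (meson mult_pos_pos order_less_le_trans order_refl)
  then show ?thesis unfolding Wt_def by auto
qed

lemma factor1:
  fixes p :: "'i \<Rightarrow> 'c \<Rightarrow> real"
  assumes finI: "finite I" and iI: "i \<in> I" and cL: "c \<in> L i" and finL: "\<forall>j\<in>I. finite (L j)"
    and s1: "sum (p i) (L i) = 1"
    and dep: "\<And>g g'. (\<And>j. j \<noteq> i \<Longrightarrow> g j = g' j) \<Longrightarrow> g \<in> X \<longleftrightarrow> g' \<in> X"
  shows "Wt (\<lambda>g. \<Prod>j\<in>I. p j (g j)) (PiE I L) ({g. g i = c} \<inter> X)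
       = p i c * Wt (\<lambda>g. \<Prod>j\<in>I. p j (g j)) (PiE I L) X"
proof -
  define I' where "I' = I - {i}"
  have II: "I = insert i I'" and iI': "i \<notin> I'" using iI unfolding I'_def by auto
  define h where "h = (\<lambda>(y::'c, g::'i \<Rightarrow> 'c). g(i := y))"
  define w' where "w' = (\<lambda>g. \<Prod>j\<in>I'. p j (g j))"
  have finI': "finite I'" using finI I'_def by auto
  have finP: "finite (L i \<times> PiE I' L)"
    using finL iI II finI' by (auto intro!: finite_PiE finite_cartesian_product)
  have img: "PiE I L = h ` (L i \<times> PiE I' L)" unfolding h_def II by (rule PiE_insert_eq)
  have inj: "inj_on h (L i \<times> PiE I' L)" unfolding h_def by (rule inj_combinator[OF iI'])
  have wh: "(\<Prod>j\<in>I. p j (h (y, g) j)) = p i y * w' g" for y g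
  proof -
    have "(\<Prod>j\<in>I. p j (h (y, g) j)) = p i y * (\<Prod>j\<in>I'. p j (h (y, g) j))"
      unfolding II using finI' iI' by (simp add: h_def)
    also have "(\<Prod>j\<in>I'. p j (h (y, g) j)) = w' g"
      unfolding w'_def h_def using iI' by (intro prod.cong) auto
    finally show ?thesis .
  qed
  have gen: "Wt (\<lambda>g. \<Prod>j\<in>I. p j (g j)) (PiE I L) Y
      = (\<Sum>y\<in>L i. \<Sum>g\<in>PiE I' L. if h (y, g) \<in> Y then p i y * w' g else 0)" for Y
  proof -
    have "Wt (\<lambda>g. \<Prod>j\<in>I. p j (g j)) (PiE I L) Y
        = (\<Sum>g\<in>PiE I L. if g \<in> Y then (\<Prod>j\<in>I. p j (g j)) else 0)"
      unfolding Wt_def using finI finL by (intro sum.inter_restrict) (auto intro!: finite_PiE)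
    also have "\<dots> = (\<Sum>z\<in>L i \<times> PiE I' L. if h z \<in> Y then (\<Prod>j\<in>I. p j (h z j)) else 0)"
      unfolding img by (subst sum.reindex[OF inj]) (simp add: comp_def)
    also have "\<dots> = (\<Sum>z\<in>L i \<times> PiE I' L. if h z \<in> Y then p i (fst z) * w' (snd z) else 0)"
      by (intro sum.cong refl) (auto simp: wh[symmetric])
    also have "\<dots> = (\<Sum>y\<in>L i. \<Sum>g\<in>PiE I' L. if h (y, g) \<in> Y then p i y * w' g else 0)"
      unfolding sum.cartesian_product by (intro sum.cong refl) auto
    finally show ?thesis .
  qed
  define Q where "Q = (\<lambda>g. h (c, g) \<in> X)"
  define F where "F = (\<Sum>g\<in>PiE I' L. if Q g then w' g else 0)"
  have hX: "h (y, g) \<in> X \<longleftrightarrow> Q g" for y g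
    unfolding Q_def by (rule dep) (auto simp: h_def)
  have "Wt (\<lambda>g. \<Prod>j\<in>I. p j (g j)) (PiE I L) X = (\<Sum>y\<in>L i. p i y * F)"
    unfolding gen F_def sum_distrib_left
    by (intro sum.cong refl) (auto simp: hX)
  also have "\<dots> = F" using s1 by (simp add: sum_distrib_right[symmetric])
  finally have R: "Wt (\<lambda>g. \<Prod>j\<in>I. p j (g j)) (PiE I L) X = F" .
  have "Wt (\<lambda>g. \<Prod>j\<in>I. p j (g j)) (PiE I L) ({g. g i = c} \<inter> X)
      = (\<Sum>y\<in>L i. if y = c then p i c * F else 0)"
    unfolding gen F_def sum_distrib_left
    by (intro sum.cong refl) (auto simp: hX h_def Q_def intro!: sum.cong)
  also have "\<dots> = p i c * F" using cL finL iI by simp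
  finally show ?thesis using R by simp
qed

theorem lemma2p1:
  fixes V :: "'v set" and E :: "'v set set" and k :: nat
    and L :: "'v set \<Rightarrow> nat set" and \<mu> :: "'v set \<Rightarrow> nat \<Rightarrow> real"
    and \<sigma> :: "'v set \<Rightarrow> 'v set \<Rightarrow> nat \<Rightarrow> nat" and l n :: real
  assumes "finite V"
    and "k_uniform k V E"
    and "linear_hg E"
    and "edge_correspondence E \<sigma>"
    and "weighted_list_assignment E L \<mu>"
    and "\<forall>e\<in>E. finite (L e)"
    and "l > 0" and "n > 0"
    and "\<forall>e\<in>E. l / n \<ge> 3 * exp 1 * real k"
    and "\<forall>e\<in>E. list_weight \<mu> L e \<ge> l"
    and "\<forall>e\<in>E. \<forall>v\<in>e. \<forall>c\<in>L e. weight \<mu> (Nbhd E L \<sigma> e v c) \<le> n"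
  shows "\<exists>\<gamma>. is_colouring E L \<sigma> \<gamma>"
proof -
  note finV = assms(1) and kun = assms(2) and ec = assms(4) and wla = assms(5)
    and finL = assms(6) and l0 = assms(7) and n0 = assms(8) and ratio = assms(9)
    and lw = assms(10) and nb = assms(11)
  have finE: "finite E" using kun finV unfolding k_uniform_def
    by (meson Pow_iff finite_Pow_iff finite_subset subsetI)
  have fine: "\<And>e. e \<in> E \<Longrightarrow> finite e \<and> card e = k" using kun unfolding k_uniform_def by auto
  have Lcol: "\<And>e. e \<in> E \<Longrightarrow> L e \<subseteq> colours" using wla unfolding weighted_list_assignment_def by auto
  have mu0: "\<And>e c. e \<in> E \<Longrightarrow> c \<in> L e \<Longrightarrow> 0 < \<mu> e c"
    using wla unfolding weighted_list_assignment_def by auto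
  define \<Lambda> where "\<Lambda> = (\<lambda>e. list_weight \<mu> L e)"
  define p where "p = (\<lambda>e c. \<mu> e c / \<Lambda> e)"
  have Lam: "\<And>e. e \<in> E \<Longrightarrow> \<Lambda> e \<ge> l" using lw unfolding \<Lambda>_def by auto
  have p0: "\<And>e c. e \<in> E \<Longrightarrow> c \<in> L e \<Longrightarrow> 0 < p e c"
    unfolding p_def using mu0 Lam l0 by (smt (verit) divide_pos_pos)
  have ple: "\<And>e c. e \<in> E \<Longrightarrow> c \<in> L e \<Longrightarrow> p e c \<le> \<mu> e c / l"
    unfolding p_def using mu0 Lam l0 by (smt (verit) frac_le)
  have psum: "\<And>e. e \<in> E \<Longrightarrow> sum (p e) (L e) = 1"
  proof -
    fix e assume "e \<in> E"
    then have "\<Lambda> e > 0" using Lam l0 by force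
    then show "sum (p e) (L e) = 1" unfolding p_def
      by (simp add: sum_divide_distrib[symmetric] \<Lambda>_def list_weight_def)
  qed
  have Lne: "\<And>e. e \<in> E \<Longrightarrow> L e \<noteq> {}"
    using lw l0 unfolding list_weight_def by fastforce
  define \<Omega> where "\<Omega> = PiE E L"
  define w where "w = (\<lambda>g. \<Prod>j\<in>E. p j (g j))"
  define B where "B = {{(e,c),(f,c')} | e f c c'. adjacent E e f \<and> c \<in> L e \<and> c' \<in> L f \<and> \<sigma> e f c = c'}"
  define A where "A = (\<lambda>D::('v set \<times> nat) set. {g. \<forall>(i,c)\<in>D. g i = c})"
  define dm where "dm = (\<lambda>D::('v set \<times> nat) set. fst ` D)"
  define P where "P = (\<lambda>D::('v set \<times> nat) set. \<Prod>(i,c)\<in>D. p i c)"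
  define x where "x = (\<lambda>D. 2 * P D)"
  have finO: "finite \<Omega>" unfolding \<Omega>_def using finE finL by (auto intro!: finite_PiE)
  have wpos: "\<forall>g\<in>\<Omega>. w g > 0" unfolding \<Omega>_def w_def using p0 by (auto intro!: prod_pos)
  then have wnn: "\<forall>g\<in>\<Omega>. w g \<ge> 0" by auto
  have Bsub: "B \<subseteq> Pow (Sigma E L)" unfolding B_def adjacent_def by auto
  have finB: "finite B"
    by (rule finite_subset[OF Bsub]) (use finE finL in auto)
  have P2: "P {(e,c),(f,c')} = p e c * p f c'" if "e \<noteq> f" for e f c c'
    unfolding P_def using that by simp
  have Bcase: "\<exists>e f c c'. C = {(e,c),(f,c')} \<and> adjacent E e f \<and> c \<in> L e \<and> c' \<in> L f \<and> \<sigma> e f c = c'"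
    if "C \<in> B" for C using that unfolding B_def by blast
  have adjE: "e \<in> E" "f \<in> E" "e \<noteq> f" "e \<inter> f \<noteq> {}" if "adjacent E e f" for e f
    using that unfolding adjacent_def by auto
  have PB: "P C \<ge> 0 \<and> P C = p e c * p f c'" if "C = {(e,c),(f,c')}" "adjacent E e f" "c \<in> L e" "c' \<in> L f" for C e f c c'
    using that P2 p0 adjE[OF that(2)] by (smt (verit) mult_pos_pos)
  have Pnn: "\<forall>C\<in>B. P C \<ge> 0"
    using Bcase PB by metis
  have gdep: "g \<in> Gd A S \<longleftrightarrow> g' \<in> Gd A S"
    if "\<And>j. j \<notin> K \<Longrightarrow> g j = g' j" "\<forall>C\<in>S. fst ` C \<inter> K = {}" for g g' K S
  proof -
    have "\<forall>C\<in>S. (g \<in> A C \<longleftrightarrow> g' \<in> A C)"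
    proof
      fix C assume "C \<in> S"
      then have "\<forall>(i,c)\<in>C. g i = g' i" using that by force
      then show "g \<in> A C \<longleftrightarrow> g' \<in> A C" unfolding A_def by fastforce
    qed
    then show ?thesis unfolding Gd_def by auto
  qed
  have indep: "\<forall>b\<in>B. \<forall>S\<subseteq>B. (\<forall>C\<in>S. dm C \<inter> dm b = {}) \<longrightarrow> Wt w \<Omega> (A b \<inter> Gd A S) \<le> P b * Wt w \<Omega> (Gd A S)"
  proof (intro ballI allI impI)
    fix b S assume b: "b \<in> B" and S: "S \<subseteq> B" and dis: "\<forall>C\<in>S. dm C \<inter> dm b = {}"
    obtain e f c c' where bb: "b = {(e,c),(f,c')}" "adjacent E e f" "c \<in> L e" "c' \<in> L f"
      using Bcase[OF b] by blast
    note ef = adjE[OF bb(2)]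
    have dis2: "\<forall>C\<in>S. fst ` C \<inter> {e,f} = {}" using dis bb(1) unfolding dm_def by auto
    have eq: "A b \<inter> Gd A S = {g. g e = c} \<inter> ({g. g f = c'} \<inter> Gd A S)"
      unfolding bb(1) A_def by auto
    have "Wt w \<Omega> ({g. g e = c} \<inter> ({g. g f = c'} \<inter> Gd A S)) = p e c * Wt w \<Omega> ({g. g f = c'} \<inter> Gd A S)"
      unfolding w_def \<Omega>_def
    proof (rule factor1[where I=E and L=L and p=p, OF finE ef(1) bb(3) finL psum[OF ef(1)]])
      fix g g' :: "'v set \<Rightarrow> nat" assume h: "\<And>j. j \<noteq> e \<Longrightarrow> g j = g' j"
      have "g f = g' f" using h ef by auto
      moreover have "g \<in> Gd A S \<longleftrightarrow> g' \<in> Gd A S"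
        by (rule gdep[of "{e,f}"]) (use h dis2 in auto)
      ultimately show "g \<in> {g. g f = c'} \<inter> Gd A S \<longleftrightarrow> g' \<in> {g. g f = c'} \<inter> Gd A S" by auto
    qed
    also have "Wt w \<Omega> ({g. g f = c'} \<inter> Gd A S) = p f c' * Wt w \<Omega> (Gd A S)"
      unfolding w_def \<Omega>_def
    proof (rule factor1[where I=E and L=L and p=p, OF finE ef(2) bb(4) finL psum[OF ef(2)]])
      fix g g' :: "'v set \<Rightarrow> nat" assume h: "\<And>j. j \<noteq> f \<Longrightarrow> g j = g' j"
      show "g \<in> Gd A S \<longleftrightarrow> g' \<in> Gd A S"
        by (rule gdep[of "{e,f}"]) (use h dis2 in auto)
    qed
    finally show "Wt w \<Omega> (A b \<inter> Gd A S) \<le> P b * Wt w \<Omega> (Gd A S)"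
      using eq PB[OF bb] by simp
  qed
  have knl: "real k * n / l \<le> 1/8" if "e \<in> E" for e
  proof -
    have "3 * exp 1 * real k \<le> l / n" using ratio that by auto
    moreover have "8 * real k \<le> 3 * exp 1 * real k" using exp1_ge by (intro mult_right_mono) auto
    ultimately have "8 * real k \<le> l / n" by linarith
    then have "8 * real k * n \<le> l" using n0 by (simp add: le_divide_eq)
    then show ?thesis using l0 by (simp add: divide_le_eq)
  qed
  have Tb: "(\<Sum>C\<in>{C\<in>B. e \<in> fst ` C}. P C) \<le> real k * n / l" if eE: "e \<in> E" for e
  proof -
    define M where "M = Sigma (L e) (\<lambda>d. Sigma e (\<lambda>v. Nbhd E L \<sigma> e v d))"
    define \<phi> where "\<phi> = (\<lambda>(d::nat, v::'v, (g::'v set, d'::nat)). {(e,d),(g,d')})"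
    have memN: "(g,d') \<in> Nbhd E L \<sigma> e v d \<longleftrightarrow> g \<in> E \<and> v \<in> g \<and> g \<noteq> e \<and> d' \<in> L g \<and> \<sigma> g e d' = d" for g d' v d
      unfolding Nbhd_def blocks_def by auto
    have finN: "finite (Nbhd E L \<sigma> e v d)" for v d
      by (rule finite_subset[of _ "Sigma E L"]) (use finE finL memN in auto)
    have finM: "finite M" unfolding M_def using finL eE fine[OF eE] finN by auto
    have Pphi: "P (\<phi> z) = p e d * p g d' \<and> 0 \<le> p e d * p g d'" if "z \<in> M" "z = (d, v, g, d')" for z d v g d'
    proof -
      have "d \<in> L e" "g \<in> E" "g \<noteq> e" "d' \<in> L g" using that memN unfolding M_def by auto
      then show ?thesis using that P2 p0 eE unfolding \<phi>_def
        by (smt (verit, ccfv_threshold) case_prod_conv mult_nonneg_nonneg)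
    qed
    have sub: "{C\<in>B. e \<in> fst ` C} \<subseteq> \<phi> ` M"
    proof
      fix C assume "C \<in> {C\<in>B. e \<in> fst ` C}"
      then have CB: "C \<in> B" and eC: "e \<in> fst ` C" by auto
      obtain a b c c' where cc: "C = {(a,c),(b,c')}" "adjacent E a b" "c \<in> L a" "c' \<in> L b" "\<sigma> a b c = c'"
        using Bcase[OF CB] by blast
      note ab = adjE[OF cc(2)]
      obtain v where v: "v \<in> a" "v \<in> b" using ab(4) by auto
      have "e = a \<or> e = b" using eC cc(1) by auto
      then show "C \<in> \<phi> ` M"
      proof
        assume ea: "e = a"
        have "c \<in> colours" using Lcol ab cc by auto
        then have "\<sigma> b a c' = c" using ec cc(2,5) unfolding edge_correspondence_def by auto
        then have "(c, v, b, c') \<in> M" unfolding M_def using ea cc ab v memN by auto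
        moreover have "C = \<phi> (c, v, b, c')" unfolding \<phi>_def using ea cc by auto
        ultimately show ?thesis by blast
      next
        assume eb: "e = b"
        have "(c', v, a, c) \<in> M" unfolding M_def using eb cc ab v memN by auto
        moreover have "C = \<phi> (c', v, a, c)" unfolding \<phi>_def using eb cc by auto
        ultimately show ?thesis by blast
      qed
    qed
    have "(\<Sum>C\<in>{C\<in>B. e \<in> fst ` C}. P C) \<le> (\<Sum>C\<in>\<phi> ` M. P C)"
      by (rule sum_mono2) (use finM sub Pphi in auto)
    also have "\<dots> \<le> (\<Sum>z\<in>M. P (\<phi> z))"
      using sum_image_le[of M "P" \<phi>] finM Pphi by (auto simp: comp_def)
    also have "\<dots> = (\<Sum>z\<in>M. (\<lambda>(d, v, g, d'). p e d * p g d') z)"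
      by (intro sum.cong refl) (use Pphi in auto)
    also have "\<dots> = (\<Sum>d\<in>L e. \<Sum>v\<in>e. \<Sum>(g,d')\<in>Nbhd E L \<sigma> e v d. p e d * p g d')"
      unfolding M_def using finL eE fine[OF eE] finN
      by (simp add: sum.Sigma split_def)
    also have "\<dots> \<le> (\<Sum>d\<in>L e. \<Sum>v\<in>e. p e d * (n / l))"
    proof (intro sum_mono)
      fix d v assume d: "d \<in> L e" and v: "v \<in> e"
      have "(\<Sum>(g,d')\<in>Nbhd E L \<sigma> e v d. p e d * p g d') = p e d * (\<Sum>(g,d')\<in>Nbhd E L \<sigma> e v d. p g d')"
        by (simp add: sum_distrib_left split_def)
      also have "(\<Sum>(g,d')\<in>Nbhd E L \<sigma> e v d. p g d') \<le> (\<Sum>(g,d')\<in>Nbhd E L \<sigma> e v d. \<mu> g d' / l)"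
        by (rule sum_mono) (use ple memN in auto)
      also have "\<dots> = weight \<mu> (Nbhd E L \<sigma> e v d) / l"
        unfolding weight_def by (simp add: sum_divide_distrib split_def)
      also have "\<dots> \<le> n / l" using nb eE v d l0 by (simp add: divide_right_mono)
      finally show "(\<Sum>(g,d')\<in>Nbhd E L \<sigma> e v d. p e d * p g d') \<le> p e d * (n / l)"
        using p0[OF eE d] by (simp add: mult_left_mono)
    qed
    also have "\<dots> = (\<Sum>d\<in>L e. p e d) * (real k * n / l)"
      using fine[OF eE] by (simp add: sum_distrib_right sum_distrib_left sum_divide_distrib[symmetric] mult_ac)
    also have "\<dots> = real k * n / l" using psum[OF eE] by simp
    finally show ?thesis .
  qed
  have Gb: "(\<Sum>C\<in>{C\<in>B. dm C \<inter> dm b \<noteq> {}}. P C) \<le> 1/4" if b: "b \<in> B" for b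
  proof -
    obtain e f c c' where bb: "b = {(e,c),(f,c')}" "adjacent E e f" "c \<in> L e" "c' \<in> L f"
      using Bcase[OF b] by blast
    note ef = adjE[OF bb(2)]
    define Te where "Te = {C\<in>B. e \<in> fst ` C}"
    define Tf where "Tf = {C\<in>B. f \<in> fst ` C}"
    have sub: "{C\<in>B. dm C \<inter> dm b \<noteq> {}} \<subseteq> Te \<union> Tf"
      unfolding Te_def Tf_def dm_def bb(1) by auto
    have fT: "finite Te" "finite Tf" unfolding Te_def Tf_def using finB by auto
    have "(\<Sum>C\<in>{C\<in>B. dm C \<inter> dm b \<noteq> {}}. P C) \<le> (\<Sum>C\<in>Te \<union> Tf. P C)"
      by (rule sum_mono2) (use fT sub Pnn Te_def Tf_def in auto)
    also have "\<dots> = (\<Sum>C\<in>Te. P C) + (\<Sum>C\<in>Tf. P C) - (\<Sum>C\<in>Te \<inter> Tf. P C)"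
      using fT by (simp add: sum_Un)
    also have "\<dots> \<le> (\<Sum>C\<in>Te. P C) + (\<Sum>C\<in>Tf. P C)"
      using Pnn unfolding Te_def by (smt (verit) Int_iff mem_Collect_eq sum_nonneg)
    also have "\<dots> \<le> real k * n / l + real k * n / l"
      using Tb[OF ef(1)] Tb[OF ef(2)] unfolding Te_def Tf_def by linarith
    also have "\<dots> \<le> 1/4" using knl[OF ef(1)] by (simp add: mult_ac)
    finally show ?thesis .
  qed
  have xnn: "\<forall>b\<in>B. 0 \<le> x b" using Pnn unfolding x_def by auto
  have cond: "\<forall>b\<in>B. P b \<le> x b * (1 - (\<Sum>C\<in>{C\<in>B. dm C \<inter> dm b \<noteq> {}}. x C))"
  proof
    fix b assume b: "b \<in> B"
    have "(\<Sum>C\<in>{C\<in>B. dm C \<inter> dm b \<noteq> {}}. x C) = 2 * (\<Sum>C\<in>{C\<in>B. dm C \<inter> dm b \<noteq> {}}. P C)"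
      unfolding x_def by (simp add: sum_distrib_left)
    then have "1 - (\<Sum>C\<in>{C\<in>B. dm C \<inter> dm b \<noteq> {}}. x C) \<ge> 1/2" using Gb[OF b] by linarith
    then have "x b * (1 - (\<Sum>C\<in>{C\<in>B. dm C \<inter> dm b \<noteq> {}}. x C)) \<ge> x b * (1/2)"
      using xnn b by (intro mult_left_mono) auto
    then show "P b \<le> x b * (1 - (\<Sum>C\<in>{C\<in>B. dm C \<inter> dm b \<noteq> {}}. x C))" unfolding x_def by simp
  qed
  have x1: "\<forall>b\<in>B. x b < 1"
  proof
    fix b assume b: "b \<in> B"
    obtain e f c c' where bb: "b = {(e,c),(f,c')}" using Bcase[OF b] by blast
    have "b \<in> {C\<in>B. dm C \<inter> dm b \<noteq> {}}" using b bb unfolding dm_def by auto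
    then have "P b \<le> (\<Sum>C\<in>{C\<in>B. dm C \<inter> dm b \<noteq> {}}. P C)"
      by (intro member_le_sum) (use Pnn finB in auto)
    then show "x b < 1" using Gb[OF b] unfolding x_def by linarith
  qed
  have One: "\<Omega> \<noteq> {}" unfolding \<Omega>_def using Lne by (simp add: PiE_eq_empty_iff)
  have pos: "sum w \<Omega> > 0" using One finO wpos by (intro sum_pos) auto
  have "\<Omega> \<inter> Gd A B \<noteq> {}"
    by (rule lll[OF finO wnn finB indep xnn cond x1 pos])
  then obtain \<gamma> where g: "\<gamma> \<in> \<Omega>" "\<gamma> \<in> Gd A B" by auto
  have "is_colouring E L \<sigma> \<gamma>"
    unfolding is_colouring_def
  proof (intro conjI allI impI ballI)
    fix e assume "e \<in> E" then show "\<gamma> e \<in> L e" using g(1) unfolding \<Omega>_def by auto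
  next
    fix e f assume adj: "adjacent E e f"
    show "\<not> blocks \<sigma> e (\<gamma> e) f (\<gamma> f)"
    proof
      assume bl: "blocks \<sigma> e (\<gamma> e) f (\<gamma> f)"
      note ef = adjE[OF adj]
      have "{(e, \<gamma> e), (f, \<gamma> f)} \<in> B" unfolding B_def using adj bl g(1) ef
        unfolding blocks_def \<Omega>_def by blast
      moreover have "\<gamma> \<in> A {(e, \<gamma> e), (f, \<gamma> f)}" unfolding A_def by auto
      ultimately show False using g(2) unfolding Gd_def by auto
    qed
  qed
  then show ?thesis by blast
qed
end
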